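(* If a finite connected interval graph $G$ is balanced and $p$-critical (for some $p\ge1$), then $G$ has exactly one basepoint.
   Context: An interval graph is a finite simple graph whose vertices can be assigned (closed, bounded) real intervals $I_v$ so that $v,w$ are adjacent iff $I_v\cap I_w\ne\emptyset$. For such a representation $\alpha$, $\mathrm{imp}_\alpha(z)$ is the number of intervals $I_w$, $w\ne z$, with $I_w\subseteq I_z$; $\mathrm{imp}(\alpha)=\max_z\mathrm{imp}_\alpha(z)$; and the impropriety $\mathrm{imp}(G)$ is the minimum of $\mathrm{imp}(\alpha)$ over all representations. A local component at $z$ is a connected component of $G\setminus\{z\}$; it is exterior iff it contains a vertex not adjacent to $z$. If $z$ has $n$ local components, $\mathrm{wt}(z)$ is the sum of the $n-2$ smallest orders among the non-exterior local components at $z$ ($0$ if $n\le2$), and $\mathrm{wt}(G)=\max_z \mathrm{wt}(z)$. $G$ is balanced iff $\mathrm{wt}(G)=\mathrm{imp}(G)$. If $G$ is balanced, a basepoint of $G$ is a vertex $z$ with $\mathrm{wt}(z)=\mathrm{imp}(G)$. For $p>0$, $G$ is $p$-critical iff $\mathrm{imp}(G)=p$ and every proper induced subgraph of $G$ has impropriety strictly less than $p$. *)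

theory Defs
  imports Complex_Main "HOL-Library.Multiset"
begin

text \<open>A finite simple graph is given by a vertex set V and a symmetric irreflexive
adjacency relation E (only its restriction to V matters). Induced subgraphs are
obtained by shrinking V.\<close>

definition simple_graph :: "'a set \<Rightarrow> ('a \<Rightarrow> 'a \<Rightarrow> bool) \<Rightarrow> bool" where
  "simple_graph V E \<longleftrightarrow> finite V \<and> (\<forall>x y. E x y \<longleftrightarrow> E y x) \<and> (\<forall>x. \<not> E x x)"

definition interval_rep :: "'a set \<Rightarrow> ('a \<Rightarrow> 'a \<Rightarrow> bool) \<Rightarrow> ('a \<Rightarrow> real \<times> real) \<Rightarrow> bool" where
  "interval_rep V E I \<longleftrightarrow>
     (\<forall>v\<in>V. fst (I v) \<le> snd (I v)) \<and>
     (\<forall>v\<in>V. \<forall>w\<in>V. v \<noteq> w \<longrightarrow>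
        (E v w \<longleftrightarrow> {fst (I v)..snd (I v)} \<inter> {fst (I w)..snd (I w)} \<noteq> {}))"

definition interval_graph :: "'a set \<Rightarrow> ('a \<Rightarrow> 'a \<Rightarrow> bool) \<Rightarrow> bool" where
  "interval_graph V E \<longleftrightarrow> simple_graph V E \<and> (\<exists>I. interval_rep V E I)"

definition imp_at :: "'a set \<Rightarrow> ('a \<Rightarrow> real \<times> real) \<Rightarrow> 'a \<Rightarrow> nat" where
  "imp_at V I z = card {w \<in> V. w \<noteq> z \<and> {fst (I w)..snd (I w)} \<subseteq> {fst (I z)..snd (I z)}}"

definition imp_rep :: "'a set \<Rightarrow> ('a \<Rightarrow> real \<times> real) \<Rightarrow> nat" where
  "imp_rep V I = Max (insert 0 (imp_at V I ` V))"

definition impropriety :: "'a set \<Rightarrow> ('a \<Rightarrow> 'a \<Rightarrow> bool) \<Rightarrow> nat" where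
  "impropriety V E = (LEAST k. \<exists>I. interval_rep V E I \<and> imp_rep V I = k)"

definition reach :: "'a set \<Rightarrow> ('a \<Rightarrow> 'a \<Rightarrow> bool) \<Rightarrow> 'a \<Rightarrow> 'a \<Rightarrow> bool" where
  "reach W E = (\<lambda>a b. a \<in> W \<and> b \<in> W \<and> E a b)\<^sup>*\<^sup>*"

definition components :: "'a set \<Rightarrow> ('a \<Rightarrow> 'a \<Rightarrow> bool) \<Rightarrow> 'a set set" where
  "components W E = {{y \<in> W. reach W E x y} | x. x \<in> W}"

definition connected_graph :: "'a set \<Rightarrow> ('a \<Rightarrow> 'a \<Rightarrow> bool) \<Rightarrow> bool" where
  "connected_graph V E \<longleftrightarrow> V \<noteq> {} \<and> (\<forall>x\<in>V. \<forall>y\<in>V. reach V E x y)"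

definition local_components :: "'a set \<Rightarrow> ('a \<Rightarrow> 'a \<Rightarrow> bool) \<Rightarrow> 'a \<Rightarrow> 'a set set" where
  "local_components V E z = components (V - {z}) E"

definition exterior :: "('a \<Rightarrow> 'a \<Rightarrow> bool) \<Rightarrow> 'a \<Rightarrow> 'a set \<Rightarrow> bool" where
  "exterior E z C \<longleftrightarrow> (\<exists>v\<in>C. \<not> E z v)"

definition wt_at :: "'a set \<Rightarrow> ('a \<Rightarrow> 'a \<Rightarrow> bool) \<Rightarrow> 'a \<Rightarrow> nat" where
  "wt_at V E z =
     (let LC = local_components V E z;
          n = card LC;
          orders = sorted_list_of_multiset
                     (image_mset card (mset_set {C \<in> LC. \<not> exterior E z C}))
      in sum_list (take (n - 2) orders))"

definition wt :: "'a set \<Rightarrow> ('a \<Rightarrow> 'a \<Rightarrow> bool) \<Rightarrow> nat" where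
  "wt V E = Max (insert 0 (wt_at V E ` V))"

definition balanced :: "'a set \<Rightarrow> ('a \<Rightarrow> 'a \<Rightarrow> bool) \<Rightarrow> bool" where
  "balanced V E \<longleftrightarrow> wt V E = impropriety V E"

definition basepoint :: "'a set \<Rightarrow> ('a \<Rightarrow> 'a \<Rightarrow> bool) \<Rightarrow> 'a \<Rightarrow> bool" where
  "basepoint V E z \<longleftrightarrow> balanced V E \<and> z \<in> V \<and> wt_at V E z = impropriety V E"

definition critical :: "nat \<Rightarrow> 'a set \<Rightarrow> ('a \<Rightarrow> 'a \<Rightarrow> bool) \<Rightarrow> bool" where
  "critical p V E \<longleftrightarrow> 0 < p \<and> impropriety V E = p \<and>
     (\<forall>V'. V' \<subset> V \<longrightarrow> impropriety V' E < p)"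

end

theory Submission imports Defs begin
lemma take_sorted_le:
  fixes s :: "nat list"
  assumes "sorted s" "N \<subseteq># mset s" "k \<le> size N"
  shows "sum_list (take k s) \<le> sum_mset N"
  using assms
proof (induction s arbitrary: N k)
  case Nil
  then show ?case by simp
next
  case (Cons x s)
  show ?case
  proof (cases k)
    case 0 then show ?thesis by simp
  next
    case (Suc k')
    then have "N \<noteq> {#}" using Cons.prems by auto
    show ?thesis
    proof (cases "x \<in># N")
      case True
      have s1: "N - {#x#} \<subseteq># mset s" using Cons.prems(2) True
        by (simp add: subset_eq_diff_conv add_mset_add_single[symmetric] add.commute)
      have "k' \<le> size (N - {#x#})" using Cons.prems(3) Suc True by (simp add: size_Diff_singleton)
      then have "sum_list (take k' s) \<le> sum_mset (N - {#x#})"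
        using Cons.IH[OF _ s1] Cons.prems(1) by simp
      moreover have "sum_mset N = x + sum_mset (N - {#x#})" using True
        by (rule sum_mset.remove)
      ultimately show ?thesis using Suc by simp
    next
      case False
      from \<open>N \<noteq> {#}\<close> obtain y where y: "y \<in># N" by blast
      have Ns: "N \<subseteq># mset s" using Cons.prems(2) False
        by (metis diff_single_trivial subset_eq_diff_conv add_mset_add_single add.commute mset.simps(2))
      have yx: "x \<le> y" using Cons.prems(1) Ns y
        proof -
        have "y \<in> set s" using Ns y mset_subset_eqD by fastforce
        then show ?thesis using Cons.prems(1) by simp
      qed
      have s1: "N - {#y#} \<subseteq># mset s" using Ns
        by (rule subset_mset.order_trans[OF diff_subset_eq_self])
      have "k' \<le> size (N - {#y#})" using Cons.prems(3) Suc y by (simp add: size_Diff_singleton)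
      then have "sum_list (take k' s) \<le> sum_mset (N - {#y#})"
        using Cons.IH[OF _ s1] Cons.prems(1) by simp
      moreover have "sum_mset N = y + sum_mset (N - {#y#})" using y
        by (rule sum_mset.remove)
      ultimately show ?thesis using Suc yx by simp
    qed
  qed
qed


definition cmp :: "'a set \<Rightarrow> ('a \<Rightarrow> 'a \<Rightarrow> bool) \<Rightarrow> 'a \<Rightarrow> 'a set" where
  "cmp W E x = {y \<in> W. reach W E x y}"

lemma components_cmp: "components W E = cmp W E ` W"
  unfolding components_def cmp_def by auto

lemma reach_edge: "a \<in> W \<Longrightarrow> b \<in> W \<Longrightarrow> E a b \<Longrightarrow> reach W E a b"
  unfolding reach_def by (rule r_into_rtranclp) simp

lemma reach_refl: "reach W E a a"
  unfolding reach_def by simp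

lemma reach_trans: "reach W E a b \<Longrightarrow> reach W E b c \<Longrightarrow> reach W E a c"
  unfolding reach_def by (rule rtranclp_trans)

lemma reach_in: "reach W E x y \<Longrightarrow> x = y \<or> (x \<in> W \<and> y \<in> W)"
  unfolding reach_def by (induction rule: rtranclp_induct) auto

lemma reach_sym:
  assumes sym: "symp E"
  shows "reach W E x y \<Longrightarrow> reach W E y x"
  unfolding reach_def
proof (induction rule: rtranclp_induct)
  case base then show ?case by simp
next
  case (step y z)
  then have "E z y" using sym by (blast dest: sympD)
  then show ?case using step by (auto intro: converse_rtranclp_into_rtranclp)
qed

lemma reach_mono: "W \<subseteq> W' \<Longrightarrow> reach W E x y \<Longrightarrow> reach W' E x y"
  unfolding reach_def by (rule rtranclp_mono[THEN predicate2D]) auto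

lemma reach_cmp:
  assumes "x \<in> W" "reach W E x y"
  shows "reach (cmp W E x) E x y"
  using assms(2) unfolding reach_def
proof (induction rule: rtranclp_induct)
  case base then show ?case by simp
next
  case (step y z)
  have ry: "reach W E x y" using step(1) by (simp add: reach_def)
  have yW: "y \<in> W" "z \<in> W" "E y z" using step(2) by auto
  have rz: "reach W E x z" using reach_trans[OF ry reach_edge[of y W z E, OF yW]] .
  have yc: "y \<in> cmp W E x" "z \<in> cmp W E x" using ry rz yW by (simp_all add: cmp_def)
  have "reach (cmp W E x) E y z" using reach_edge[of y "cmp W E x" z E, OF yc yW(3)] .
  then have "reach (cmp W E x) E x z" using reach_trans step(3) unfolding reach_def by fast
  then show ?case unfolding reach_def .
qed

lemma cmp_self: "x \<in> W \<Longrightarrow> x \<in> cmp W E x"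
  unfolding cmp_def by (simp add: reach_refl)

lemma cmp_sub: "cmp W E x \<subseteq> W"
  unfolding cmp_def by auto

lemma cmp_eq:
  assumes sym: "symp E"
  shows "reach W E x y \<Longrightarrow> cmp W E x = cmp W E y"
proof -
  assume r: "reach W E x y"
  have r': "reach W E y x" using reach_sym[OF sym r] .
  show ?thesis
  proof
    show "cmp W E x \<subseteq> cmp W E y" unfolding cmp_def using reach_trans[OF r'] by auto
    show "cmp W E y \<subseteq> cmp W E x" unfolding cmp_def using reach_trans[OF r] by auto
  qed
qed

lemma cmp_mem_eq:
  assumes sym: "symp E"
  shows "y \<in> cmp W E x \<Longrightarrow> cmp W E y = cmp W E x"
proof -
  assume "y \<in> cmp W E x"
  then have "reach W E x y" unfolding cmp_def by simp
  then have "cmp W E x = cmp W E y" by (rule cmp_eq[OF sym])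
  then show ?thesis by simp
qed

lemma cmp_disj:
  assumes sym: "symp E"
  shows "t \<in> cmp W E x \<Longrightarrow> t \<in> cmp W E y \<Longrightarrow> cmp W E x = cmp W E y"
proof -
  assume a: "t \<in> cmp W E x" "t \<in> cmp W E y"
  show ?thesis using cmp_mem_eq[OF sym a(1)] cmp_mem_eq[OF sym a(2)] by simp
qed

lemma cmp_closed:
  assumes "y \<in> cmp W E x" "z \<in> W" "E y z"
  shows "z \<in> cmp W E x"
proof -
  have "reach W E x y" "y \<in> W" using assms(1) unfolding cmp_def by auto
  then have "reach W E x z" using reach_trans[OF _ reach_edge[of y W z E, OF _ assms(2,3)]] by blast
  then show ?thesis using assms(2) unfolding cmp_def by simp
qed

lemma cmp_reach_mono:
  assumes "x \<in> W" "W \<subseteq> W'"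
  shows "cmp W E x \<subseteq> cmp W' E x"
  unfolding cmp_def using assms reach_mono by fastforce

lemma reach_first_hit:
  assumes "reach W E x z" "x \<noteq> z"
  shows "\<exists>y. reach (W - {z}) E x y \<and> E y z \<and> y \<in> W - {z}"
  using assms unfolding reach_def
proof (induction rule: converse_rtranclp_induct)
  case base then show ?case by simp
next
  case (step x x')
  have xW: "x \<in> W" "x' \<in> W" "E x x'" using step(1) by auto
  show ?case
  proof (cases "x' = z")
    case True then show ?thesis using xW step.prems by (intro exI[of _ x] conjI) auto
  next
    case False
    have "\<exists>y. reach (W - {z}) E x' y \<and> E y z \<and> y \<in> W - {z}"
      using step(3) False unfolding reach_def by simp
    then obtain y where y: "reach (W - {z}) E x' y" "E y z" "y \<in> W - {z}" by blast
    have e: "reach (W - {z}) E x x'" using xW False step.prems by (intro reach_edge) auto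
    have "reach (W - {z}) E x y" using reach_trans[OF e y(1)] .
    then show ?thesis using y unfolding reach_def by blast
  qed
qed


lemma conn_nb:
  assumes sym: "symp E" and "z \<in> W" and conn: "\<forall>v\<in>W. reach W E v z"
    and K: "K \<in> components (W - {z}) E"
  shows "\<exists>v\<in>K. E z v"
proof -
  obtain x where x: "x \<in> W - {z}" "K = cmp (W - {z}) E x" using K unfolding components_cmp by blast
  have "reach W E x z" using conn x by blast
  then obtain y where y: "reach (W - {z}) E x y" "E y z" "y \<in> W - {z}"
    using reach_first_hit[OF \<open>reach W E x z\<close>] x(1) by blast
  have "y \<in> K" using x(2) y unfolding cmp_def by simp
  moreover have "E z y" using sym y(2) by (blast dest: sympD)
  ultimately show ?thesis by blast
qed

lemma rep_adj:
  assumes "interval_rep W E I" "v \<in> W" "w \<in> W" "v \<noteq> w"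
  shows "E v w \<longleftrightarrow> (\<exists>t. fst (I v) \<le> t \<and> t \<le> snd (I v) \<and> fst (I w) \<le> t \<and> t \<le> snd (I w))"
proof -
  have "E v w \<longleftrightarrow> {fst (I v)..snd (I v)} \<inter> {fst (I w)..snd (I w)} \<noteq> {}"
    using assms unfolding interval_rep_def by blast
  also have "\<dots> \<longleftrightarrow> (\<exists>t. fst (I v) \<le> t \<and> t \<le> snd (I v) \<and> fst (I w) \<le> t \<and> t \<le> snd (I w))"
    unfolding ex_in_conv[symmetric] by (simp only: Int_iff atLeastAtMost_iff conj_assoc)
  finally show ?thesis .
qed

lemma rep_le: "interval_rep W E I \<Longrightarrow> v \<in> W \<Longrightarrow> fst (I v) \<le> snd (I v)"
  unfolding interval_rep_def by blast

lemma cover_left: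
  assumes rep: "interval_rep W E I" and v: "v \<in> W - {z}"
    and r: "reach (W - {z}) E v u" and ua: "a \<le> snd (I u)" and va: "fst (I v) < a"
  shows "\<exists>w. reach (W - {z}) E v w \<and> w \<in> W - {z} \<and> fst (I w) \<le> a \<and> a \<le> snd (I w)"
proof -
  have "(\<exists>w. reach (W - {z}) E v w \<and> w \<in> W - {z} \<and> fst (I w) \<le> a \<and> a \<le> snd (I w)) \<or> snd (I u) < a"
    using r unfolding reach_def
  proof (induction rule: rtranclp_induct)
    case base
    show ?case
    proof (cases "a \<le> snd (I v)")
      case True then show ?thesis using v va by (intro disjI1 exI[of _ v]) (auto simp: reach_refl[unfolded reach_def])
    next
      case False then show ?thesis by simp
    qed
  next
    case (step y y')
    have yW: "y \<in> W - {z}" "y' \<in> W - {z}" "E y y'" using step(2) by auto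
    have ry': "reach (W - {z}) E v y'" using step(1,2) unfolding reach_def
      by (simp add: rtranclp.rtrancl_into_rtrancl)
    show ?case
    proof (cases "\<exists>w. reach (W - {z}) E v w \<and> w \<in> W - {z} \<and> fst (I w) \<le> a \<and> a \<le> snd (I w)")
      case True then show ?thesis unfolding reach_def by blast
    next
      case False
      then have ya: "snd (I y) < a" using step(3) unfolding reach_def by blast
      have "fst (I y') < a"
      proof (cases "y = y'")
        case True then show ?thesis using ya rep_le[OF rep, of y] yW by simp
      next
        case False
        then obtain t where "fst (I y) \<le> t" "t \<le> snd (I y)" "fst (I y') \<le> t" "t \<le> snd (I y')"
          using rep_adj[OF rep, of y y'] yW by auto
        then show ?thesis using ya by simp
      qed
      show ?thesis
      proof (cases "a \<le> snd (I y')")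
        case True then show ?thesis using ry' yW \<open>fst (I y') < a\<close>
          unfolding reach_def by (intro disjI1 exI[of _ y']) auto
      next
        case False then show ?thesis by simp
      qed
    qed
  qed
  then show ?thesis using ua by simp
qed

lemma cover_right:
  assumes rep: "interval_rep W E I" and v: "v \<in> W - {z}"
    and r: "reach (W - {z}) E v u" and ua: "fst (I u) \<le> b" and va: "b < snd (I v)"
  shows "\<exists>w. reach (W - {z}) E v w \<and> w \<in> W - {z} \<and> fst (I w) \<le> b \<and> b \<le> snd (I w)"
proof -
  have "(\<exists>w. reach (W - {z}) E v w \<and> w \<in> W - {z} \<and> fst (I w) \<le> b \<and> b \<le> snd (I w)) \<or> b < fst (I u)"
    using r unfolding reach_def
  proof (induction rule: rtranclp_induct)
    case base
    show ?case
    proof (cases "fst (I v) \<le> b")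
      case True then show ?thesis using v va by (intro disjI1 exI[of _ v]) (auto simp: reach_refl[unfolded reach_def])
    next
      case False then show ?thesis by simp
    qed
  next
    case (step y y')
    have yW: "y \<in> W - {z}" "y' \<in> W - {z}" "E y y'" using step(2) by auto
    have ry': "reach (W - {z}) E v y'" using step(1,2) unfolding reach_def
      by (simp add: rtranclp.rtrancl_into_rtrancl)
    show ?case
    proof (cases "\<exists>w. reach (W - {z}) E v w \<and> w \<in> W - {z} \<and> fst (I w) \<le> b \<and> b \<le> snd (I w)")
      case True then show ?thesis unfolding reach_def by blast
    next
      case False
      then have ya: "b < fst (I y)" using step(3) unfolding reach_def by blast
      have "b < snd (I y')"
      proof (cases "y = y'")
        case True then show ?thesis using ya rep_le[OF rep, of y] yW by simp
      next
        case False
        then obtain t where "fst (I y) \<le> t" "t \<le> snd (I y)" "fst (I y') \<le> t" "t \<le> snd (I y')"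
          using rep_adj[OF rep, of y y'] yW by auto
        then show ?thesis using ya by simp
      qed
      show ?thesis
      proof (cases "fst (I y') \<le> b")
        case True then show ?thesis using ry' yW \<open>b < snd (I y')\<close>
          unfolding reach_def by (intro disjI1 exI[of _ y']) auto
      next
        case False then show ?thesis by simp
      qed
    qed
  qed
  then show ?thesis using ua by simp
qed


lemma cmp_reach_closed:
  assumes sym: "symp E" and "y \<in> cmp W E x" and "reach W E y w" and "w \<in> W"
  shows "w \<in> cmp W E x"
proof -
  have "reach W E x y" using assms(2) unfolding cmp_def by simp
  then have "reach W E x w" using reach_trans[OF _ assms(3)] by blast
  then show ?thesis using assms(4) unfolding cmp_def by simp
qed

lemma one_left:
  assumes sym: "symp E" and rep: "interval_rep W E I" and z: "z \<in> W"
    and nb: "\<forall>K\<in>components (W - {z}) E. \<exists>v\<in>K. E z v"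
    and K1: "K1 \<in> components (W - {z}) E" and v1: "v1 \<in> K1" "fst (I v1) < fst (I z)"
  shows "\<exists>w\<in>K1. fst (I w) \<le> fst (I z) \<and> fst (I z) \<le> snd (I w)"
proof -
  obtain x where x: "x \<in> W - {z}" "K1 = cmp (W - {z}) E x" using K1 unfolding components_cmp by blast
  obtain u where u: "u \<in> K1" "E z u" using nb K1 by blast
  have uW: "u \<in> W - {z}" using u(1) x(2) cmp_sub[of "W - {z}" E x] by blast
  have v1W: "v1 \<in> W - {z}" using v1(1) x(2) cmp_sub[of "W - {z}" E x] by blast
  obtain t where "fst (I z) \<le> t" "t \<le> snd (I z)" "fst (I u) \<le> t" "t \<le> snd (I u)"
    using rep_adj[OF rep z, of u] uW u(2) by auto
  then have ua: "fst (I z) \<le> snd (I u)" by simp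
  have K1v: "K1 = cmp (W - {z}) E v1" using cmp_mem_eq[OF sym v1(1)[unfolded x(2)]] x(2) by simp
  have "reach (W - {z}) E v1 u" using u(1) K1v unfolding cmp_def by simp
  from cover_left[OF rep v1W this ua v1(2)] obtain w where
    w: "reach (W - {z}) E v1 w" "w \<in> W - {z}" "fst (I w) \<le> fst (I z)" "fst (I z) \<le> snd (I w)" by blast
  have "w \<in> K1" using w(1,2) K1v unfolding cmp_def by simp
  then show ?thesis using w by blast
qed

lemma one_right:
  assumes sym: "symp E" and rep: "interval_rep W E I" and z: "z \<in> W"
    and nb: "\<forall>K\<in>components (W - {z}) E. \<exists>v\<in>K. E z v"
    and K1: "K1 \<in> components (W - {z}) E" and v1: "v1 \<in> K1" "snd (I z) < snd (I v1)"
  shows "\<exists>w\<in>K1. fst (I w) \<le> snd (I z) \<and> snd (I z) \<le> snd (I w)"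
proof -
  obtain x where x: "x \<in> W - {z}" "K1 = cmp (W - {z}) E x" using K1 unfolding components_cmp by blast
  obtain u where u: "u \<in> K1" "E z u" using nb K1 by blast
  have uW: "u \<in> W - {z}" using u(1) x(2) cmp_sub[of "W - {z}" E x] by blast
  have v1W: "v1 \<in> W - {z}" using v1(1) x(2) cmp_sub[of "W - {z}" E x] by blast
  obtain t where "fst (I z) \<le> t" "t \<le> snd (I z)" "fst (I u) \<le> t" "t \<le> snd (I u)"
    using rep_adj[OF rep z, of u] uW u(2) by auto
  then have ua: "fst (I u) \<le> snd (I z)" by simp
  have K1v: "K1 = cmp (W - {z}) E v1" using cmp_mem_eq[OF sym v1(1)[unfolded x(2)]] x(2) by simp
  have "reach (W - {z}) E v1 u" using u(1) K1v unfolding cmp_def by simp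
  from cover_right[OF rep v1W this ua v1(2)] obtain w where
    w: "reach (W - {z}) E v1 w" "w \<in> W - {z}" "fst (I w) \<le> snd (I z)" "snd (I z) \<le> snd (I w)" by blast
  have "w \<in> K1" using w(1,2) K1v unfolding cmp_def by simp
  then show ?thesis using w by blast
qed


lemma wt_le_imp_at:
  assumes fin: "finite W" and sym: "symp E" and rep: "interval_rep W E I" and z: "z \<in> W"
    and nb: "\<forall>K\<in>components (W - {z}) E. \<exists>v\<in>K. E z v"
  shows "wt_at W E z \<le> imp_at W I z"
proof -
  define LC where "LC = components (W - {z}) E"
  define Ins where "Ins = {K\<in>LC. \<forall>v\<in>K. fst (I z) \<le> fst (I v) \<and> snd (I v) \<le> snd (I z)}"
  define NE where "NE = {K\<in>LC. \<not> exterior E z K}"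
  define Lft where "Lft = {K\<in>LC. \<exists>v\<in>K. fst (I v) < fst (I z)}"
  define Rgt where "Rgt = {K\<in>LC. \<exists>v\<in>K. snd (I z) < snd (I v)}"
  have finLC: "finite LC" unfolding LC_def components_cmp using fin by simp
  have LCsub: "K \<subseteq> W - {z}" if hK: "K \<in> LC" for K
  proof -
    obtain x where "K = cmp (W - {z}) E x" using hK unfolding LC_def components_cmp by blast
    then show ?thesis using cmp_sub[of "W - {z}" E x] by simp
  qed
  have LCdisj: "K1 = K2" if h: "K1 \<in> LC" "K2 \<in> LC" "t \<in> K1" "t \<in> K2" for K1 K2 t
  proof -
    obtain x1 where "K1 = cmp (W - {z}) E x1" using h(1) unfolding LC_def components_cmp by blast
    moreover obtain x2 where "K2 = cmp (W - {z}) E x2" using h(2) unfolding LC_def components_cmp by blast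
    ultimately show ?thesis using cmp_disj[OF sym] h(3,4) by blast
  qed
  have LCclosed: "w2 \<in> K" if h: "K \<in> LC" "w1 \<in> K" "w2 \<in> W - {z}" "E w1 w2" for K w1 w2
  proof -
    obtain x1 where "K = cmp (W - {z}) E x1" using h(1) unfolding LC_def components_cmp by blast
    then show ?thesis using cmp_closed[of w1 "W - {z}" E x1 w2] h by blast
  qed
  have InsNE: "Ins \<subseteq> NE"
  proof
    fix K assume K: "K \<in> Ins"
    have "\<forall>v\<in>K. E z v"
    proof
      fix v assume v: "v \<in> K"
      then have vW: "v \<in> W - {z}" using LCsub K unfolding Ins_def by blast
      have h: "fst (I z) \<le> fst (I v)" "fst (I v) \<le> snd (I z)" "fst (I v) \<le> snd (I v)"
        using K v rep_le[OF rep, of v] vW unfolding Ins_def by force+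
      then have "\<exists>t. fst (I z) \<le> t \<and> t \<le> snd (I z) \<and> fst (I v) \<le> t \<and> t \<le> snd (I v)" by blast
      then show "E z v" using rep_adj[OF rep z, of v] vW by auto
    qed
    then show "K \<in> NE" using K unfolding NE_def Ins_def exterior_def by auto
  qed
  have diffsub: "LC - Ins \<subseteq> Lft \<union> Rgt"
    unfolding Ins_def Lft_def Rgt_def by (auto simp: not_le)
  have cL: "card Lft \<le> 1"
  proof -
    have "\<forall>K1\<in>Lft. \<forall>K2\<in>Lft. K1 = K2"
    proof (intro ballI)
      fix K1 K2 assume K1: "K1 \<in> Lft" and K2: "K2 \<in> Lft"
      obtain v1 where v1: "v1 \<in> K1" "fst (I v1) < fst (I z)" using K1 unfolding Lft_def by blast
      obtain v2 where v2: "v2 \<in> K2" "fst (I v2) < fst (I z)" using K2 unfolding Lft_def by blast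
      have K1C: "K1 \<in> LC" and K2C: "K2 \<in> LC" using K1 K2 unfolding Lft_def by auto
      obtain w1 where w1: "w1 \<in> K1" "fst (I w1) \<le> fst (I z)" "fst (I z) \<le> snd (I w1)"
        using one_left[OF sym rep z nb K1C[unfolded LC_def] v1] by blast
      obtain w2 where w2: "w2 \<in> K2" "fst (I w2) \<le> fst (I z)" "fst (I z) \<le> snd (I w2)"
        using one_left[OF sym rep z nb K2C[unfolded LC_def] v2] by blast
      show "K1 = K2"
      proof (cases "w1 = w2")
        case True then show ?thesis using LCdisj K1C K2C w1(1) w2(1) by blast
      next
        case False
        have W1: "w1 \<in> W - {z}" "w2 \<in> W - {z}" using LCsub K1C K2C w1(1) w2(1) by blast+
        have "\<exists>t. fst (I w1) \<le> t \<and> t \<le> snd (I w1) \<and> fst (I w2) \<le> t \<and> t \<le> snd (I w2)"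
          using w1 w2 by blast
        then have "E w1 w2" using rep_adj[OF rep, of w1 w2] W1 False by blast
        then have "w2 \<in> K1" using LCclosed K1C w1(1) W1(2) by blast
        then show ?thesis using LCdisj K1C K2C w2(1) by blast
      qed
    qed
    moreover have "finite Lft" using finLC unfolding Lft_def by simp
    ultimately show ?thesis using card_le_Suc0_iff_eq by (metis One_nat_def)
  qed
  have cR: "card Rgt \<le> 1"
  proof -
    have "\<forall>K1\<in>Rgt. \<forall>K2\<in>Rgt. K1 = K2"
    proof (intro ballI)
      fix K1 K2 assume K1: "K1 \<in> Rgt" and K2: "K2 \<in> Rgt"
      obtain v1 where v1: "v1 \<in> K1" "snd (I z) < snd (I v1)" using K1 unfolding Rgt_def by blast
      obtain v2 where v2: "v2 \<in> K2" "snd (I z) < snd (I v2)" using K2 unfolding Rgt_def by blast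
      have K1C: "K1 \<in> LC" and K2C: "K2 \<in> LC" using K1 K2 unfolding Rgt_def by auto
      obtain w1 where w1: "w1 \<in> K1" "fst (I w1) \<le> snd (I z)" "snd (I z) \<le> snd (I w1)"
        using one_right[OF sym rep z nb K1C[unfolded LC_def] v1] by blast
      obtain w2 where w2: "w2 \<in> K2" "fst (I w2) \<le> snd (I z)" "snd (I z) \<le> snd (I w2)"
        using one_right[OF sym rep z nb K2C[unfolded LC_def] v2] by blast
      show "K1 = K2"
      proof (cases "w1 = w2")
        case True then show ?thesis using LCdisj K1C K2C w1(1) w2(1) by blast
      next
        case False
        have W1: "w1 \<in> W - {z}" "w2 \<in> W - {z}" using LCsub K1C K2C w1(1) w2(1) by blast+
        have "\<exists>t. fst (I w1) \<le> t \<and> t \<le> snd (I w1) \<and> fst (I w2) \<le> t \<and> t \<le> snd (I w2)"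
          using w1 w2 by blast
        then have "E w1 w2" using rep_adj[OF rep, of w1 w2] W1 False by blast
        then have "w2 \<in> K1" using LCclosed K1C w1(1) W1(2) by blast
        then show ?thesis using LCdisj K1C K2C w2(1) by blast
      qed
    qed
    moreover have "finite Rgt" using finLC unfolding Rgt_def by simp
    ultimately show ?thesis using card_le_Suc0_iff_eq by (metis One_nat_def)
  qed
  have finLR: "finite (Lft \<union> Rgt)" using finLC unfolding Lft_def Rgt_def by simp
  have "card (LC - Ins) \<le> card (Lft \<union> Rgt)" by (rule card_mono[OF finLR diffsub])
  also have "\<dots> \<le> card Lft + card Rgt" by (rule card_Un_le)
  finally have cd: "card (LC - Ins) \<le> 2" using cL cR by simp
  have InsLC: "Ins \<subseteq> LC" unfolding Ins_def by blast
  have NELC: "NE \<subseteq> LC" unfolding NE_def by blast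
  have cLC: "card LC - 2 \<le> card Ins"
    using cd card_Diff_subset[OF finite_subset[OF InsLC finLC] InsLC] by simp
  have finNE: "finite NE" using finite_subset[OF NELC finLC] .
  have finIns: "finite Ins" using finite_subset[OF InsLC finLC] .
  have wteq: "wt_at W E z = sum_list (take (card LC - 2) (sorted_list_of_multiset (image_mset card (mset_set NE))))"
    unfolding wt_at_def local_components_def LC_def NE_def Let_def by simp
  have sub: "image_mset card (mset_set Ins) \<subseteq># mset (sorted_list_of_multiset (image_mset card (mset_set NE)))"
    using InsNE finNE by (simp add: image_mset_subseteq_mono subset_imp_msubset_mset_set)
  have "wt_at W E z \<le> sum_mset (image_mset card (mset_set Ins))"
    unfolding wteq by (rule take_sorted_le[OF sorted_sorted_list_of_multiset sub]) (simp add: cLC)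
  also have "\<dots> = sum card Ins" by (simp add: sum_unfold_sum_mset)
  also have "\<dots> = card (\<Union>Ins)"
  proof (rule card_Union_disjoint[symmetric])
    show "pairwise disjnt Ins" unfolding pairwise_def disjnt_def
      using LCdisj InsLC by blast
    show "finite K" if "K \<in> Ins" for K
      using that InsLC LCsub fin by (meson finite_Diff finite_subset subsetD)
  qed
  also have "\<dots> \<le> imp_at W I z"
  proof -
    have "\<Union>Ins \<subseteq> {w \<in> W. w \<noteq> z \<and> {fst (I w)..snd (I w)} \<subseteq> {fst (I z)..snd (I z)}}"
    proof
      fix w assume "w \<in> \<Union>Ins"
      then obtain K where K: "K \<in> Ins" "w \<in> K" by blast
      then have "w \<in> W - {z}" using InsLC LCsub by blast
      moreover have "fst (I z) \<le> fst (I w)" "snd (I w) \<le> snd (I z)" using K unfolding Ins_def by auto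
      ultimately show "w \<in> {w \<in> W. w \<noteq> z \<and> {fst (I w)..snd (I w)} \<subseteq> {fst (I z)..snd (I z)}}"
        by (simp add: subset_eq)
    qed
    then show ?thesis unfolding imp_at_def by (rule card_mono[rotated]) (simp add: fin)
  qed
  finally show ?thesis .
qed


lemma rep_restrict: "interval_rep V E I \<Longrightarrow> W \<subseteq> V \<Longrightarrow> interval_rep W E I"
  unfolding interval_rep_def by blast

lemma wt_le_impropriety:
  assumes fin: "finite W" and sym: "symp E" and rep: "interval_rep W E I" and z: "z \<in> W"
    and conn: "\<forall>v\<in>W. reach W E v z"
  shows "wt_at W E z \<le> impropriety W E"
proof -
  have nb: "\<forall>K\<in>components (W - {z}) E. \<exists>v\<in>K. E z v" using conn_nb[OF sym z conn] by blast
  have "\<exists>k. \<exists>I. interval_rep W E I \<and> imp_rep W I = k" using rep by blast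
  then have "\<exists>I. interval_rep W E I \<and> imp_rep W I = impropriety W E"
    unfolding impropriety_def by (rule LeastI_ex)
  then obtain I0 where I0: "interval_rep W E I0" "imp_rep W I0 = impropriety W E" by blast
  have "wt_at W E z \<le> imp_at W I0 z" by (rule wt_le_imp_at[OF fin sym I0(1) z nb])
  also have "imp_at W I0 z \<le> imp_rep W I0" unfolding imp_rep_def using fin z by (intro Max_ge) auto
  finally show ?thesis using I0(2) by simp
qed

lemma two_elems:
  assumes "2 \<le> card X"
  obtains a b where "a \<in> X" "b \<in> X" "a \<noteq> b"
proof -
  have "finite X" using assms card.infinite by fastforce
  then have "\<not> (\<forall>a1\<in>X. \<forall>a2\<in>X. a1 = a2)" using card_le_Suc0_iff_eq[of X] assms by simp
  then show ?thesis using that by blast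
qed


lemma comp_disjoint:
  assumes sym: "symp E" and "K1 \<in> components W E" "K2 \<in> components W E" "K1 \<noteq> K2"
  shows "K1 \<inter> K2 = {}"
proof (rule ccontr)
  assume "K1 \<inter> K2 \<noteq> {}"
  then obtain t where t: "t \<in> K1" "t \<in> K2" by blast
  obtain x1 where x1: "K1 = cmp W E x1" using assms(2) unfolding components_cmp by blast
  obtain x2 where x2: "K2 = cmp W E x2" using assms(3) unfolding components_cmp by blast
  have "K1 = K2" using cmp_disj[OF sym, of t W x1 x2] t x1 x2 by simp
  then show False using assms(4) by simp
qed

lemma comp_of_mem:
  assumes sym: "symp E" and "K \<in> components W E" "y \<in> K"
  shows "K = cmp W E y"
proof -
  obtain x where x: "K = cmp W E x" using assms(2) unfolding components_cmp by blast
  show ?thesis using cmp_mem_eq[OF sym, of y W x] assms(3) x by simp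
qed

lemma comp_sub: "K \<in> components W E \<Longrightarrow> K \<subseteq> W"
  unfolding components_cmp cmp_def by blast

lemma two_bp_false:
  assumes finV: "finite V" and sym: "symp E" and rep: "interval_rep V E I"
    and conn: "\<forall>x\<in>V. \<forall>y\<in>V. reach V E x y"
    and crit: "\<forall>V'. V' \<subset> V \<longrightarrow> impropriety V' E < p"
    and z1: "z1 \<in> V" and z2: "z2 \<in> V" and ne: "z1 \<noteq> z2"
    and w1: "1 \<le> wt_at V E z1" and w2: "wt_at V E z2 = p"
  shows False
proof -
  define LC1 where "LC1 = components (V - {z1}) E"
  have finLC1: "finite LC1" unfolding LC1_def components_cmp using finV by simp
  have c3: "3 \<le> card LC1"
  proof (rule ccontr)
    assume "\<not> 3 \<le> card LC1"
    then have "card LC1 - 2 = 0" by simp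
    then have "wt_at V E z1 = 0" unfolding wt_at_def Let_def local_components_def LC1_def[symmetric] by simp
    then show False using w1 by simp
  qed
  define D where "D = cmp (V - {z1}) E z2"
  have z2V1: "z2 \<in> V - {z1}" using z2 ne by simp
  have DLC: "D \<in> LC1" unfolding D_def LC1_def components_cmp using z2V1 by blast
  have z2D: "z2 \<in> D" unfolding D_def using cmp_self[OF z2V1] .
  have "card (LC1 - {D}) = card LC1 - 1" using DLC finLC1 by simp
  then have "2 \<le> card (LC1 - {D})" using c3 by simp
  then obtain A B where AB: "A \<in> LC1 - {D}" "B \<in> LC1 - {D}" "A \<noteq> B" by (rule two_elems)
  have ALC: "A \<in> LC1" and BLC: "B \<in> LC1" and AD: "A \<noteq> D" and BD: "B \<noteq> D" using AB by auto
  have connz1: "\<forall>v\<in>V. reach V E v z1" using conn z1 by blast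
  have nb1: "\<forall>K\<in>LC1. \<exists>v\<in>K. E z1 v" unfolding LC1_def using conn_nb[OF sym z1 connz1] by blast
  have LC1sub: "K \<subseteq> V - {z1}" if "K \<in> LC1" for K using comp_sub[of K "V - {z1}" E] that unfolding LC1_def by blast
  have LC1disj: "K1 \<inter> K2 = {}" if "K1 \<in> LC1" "K2 \<in> LC1" "K1 \<noteq> K2" for K1 K2
    using comp_disjoint[OF sym] that unfolding LC1_def by blast
  have LC1ne: "K \<noteq> {}" if "K \<in> LC1" for K using nb1 that by blast
  have ADd: "A \<inter> D = {}" using LC1disj ALC DLC AD by blast
  have BDd: "B \<inter> D = {}" using LC1disj BLC DLC BD by blast
  have ABd: "A \<inter> B = {}" using LC1disj ALC BLC AB(3) by blast
  define H where "H = V - A"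
  have HV: "H \<subset> V" unfolding H_def using LC1ne[OF ALC] LC1sub[OF ALC] by blast
  have impH: "impropriety H E < p" using crit HV by blast
  have z1H: "z1 \<in> H" unfolding H_def using z1 LC1sub[OF ALC] by blast
  have z2H: "z2 \<in> H" unfolding H_def using z2 z2D ADd by blast
  have finH: "finite H" unfolding H_def using finV by simp
  have repH: "interval_rep H E I" using rep_restrict[OF rep] HV by blast
  have reachH1: "reach H E v z1" if v: "v \<in> H" for v
  proof (cases "v = z1")
    case True then show ?thesis by (simp add: reach_refl)
  next
    case False
    then have vV1: "v \<in> V - {z1}" using v unfolding H_def by blast
    define K where "K = cmp (V - {z1}) E v"
    have KLC: "K \<in> LC1" unfolding K_def LC1_def components_cmp using vV1 by blast
    have vK: "v \<in> K" unfolding K_def using cmp_self[OF vV1] .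
    have KA: "K \<noteq> A" using vK v unfolding H_def by blast
    have KAd: "K \<inter> A = {}" using LC1disj KLC ALC KA by blast
    obtain y where y: "y \<in> K" "E z1 y" using nb1 KLC by blast
    have "reach (V - {z1}) E v y" using y(1) unfolding K_def cmp_def by simp
    then have "reach K E v y" unfolding K_def by (rule reach_cmp[OF vV1])
    moreover have "K \<subseteq> H" using LC1sub[OF KLC] KAd unfolding H_def by blast
    ultimately have r1: "reach H E v y" by (rule reach_mono[rotated])
    have yH: "y \<in> H" using y(1) \<open>K \<subseteq> H\<close> by blast
    have "E y z1" using y(2) sym by (blast dest: sympD)
    then have "reach H E y z1" using reach_edge[of y H z1 E] yH z1H by blast
    then show ?thesis using reach_trans[OF r1] by blast
  qed
  have connH: "\<forall>v\<in>H. reach H E v z2"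
  proof
    fix v assume "v \<in> H"
    have "reach H E z2 z1" using reachH1[OF z2H] .
    then have "reach H E z1 z2" by (rule reach_sym[OF sym])
    then show "reach H E v z2" using reach_trans[OF reachH1[OF \<open>v \<in> H\<close>]] by blast
  qed
  have wtH: "wt_at H E z2 \<le> impropriety H E"
    by (rule wt_le_impropriety[OF finH sym repH z2H connH])
  define LC2 where "LC2 = components (V - {z2}) E"
  define LC2' where "LC2' = components (H - {z2}) E"
  define E2 where "E2 = cmp (V - {z2}) E z1"
  have z1V2: "z1 \<in> V - {z2}" using z1 ne by simp
  have z1H2: "z1 \<in> H - {z2}" using z1H ne by simp
  have E2LC: "E2 \<in> LC2" unfolding E2_def LC2_def components_cmp using z1V2 by blast
  have z1E2: "z1 \<in> E2" unfolding E2_def using cmp_self[OF z1V2] .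
  have KE2: "K \<subseteq> E2" if KLC: "K \<in> LC1" and KD: "K \<noteq> D" for K
  proof
    fix a assume aK: "a \<in> K"
    have KDd: "K \<inter> D = {}" using LC1disj KLC DLC KD by blast
    have aV1: "a \<in> V - {z1}" using aK LC1sub[OF KLC] by blast
    have Ka: "K = cmp (V - {z1}) E a" using comp_of_mem[OF sym _ aK] KLC unfolding LC1_def by blast
    obtain y where y: "y \<in> K" "E z1 y" using nb1 KLC by blast
    have "reach (V - {z1}) E a y" using y(1) Ka unfolding cmp_def by simp
    then have "reach K E a y" using reach_cmp[OF aV1] Ka by simp
    moreover have KV2: "K \<subseteq> V - {z2}" using LC1sub[OF KLC] KDd z2D by blast
    ultimately have r1: "reach (V - {z2}) E a y" by (rule reach_mono[rotated])
    have "E y z1" using y(2) sym by (blast dest: sympD)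
    then have "reach (V - {z2}) E y z1" using reach_edge[of y "V - {z2}" z1 E] y(1) KV2 z1V2 by blast
    then have "reach (V - {z2}) E a z1" using reach_trans[OF r1] by blast
    then have "reach (V - {z2}) E z1 a" by (rule reach_sym[OF sym])
    then show "a \<in> E2" unfolding E2_def cmp_def using aK KV2 by blast
  qed
  have AE2: "A \<subseteq> E2" using KE2 ALC AD by blast
  have BE2: "B \<subseteq> E2" using KE2 BLC BD by blast
  obtain b where bB: "b \<in> B" using LC1ne[OF BLC] by blast
  have bnb: "\<not> E z2 b"
  proof
    assume e: "E z2 b"
    have bV1: "b \<in> V - {z1}" using bB LC1sub[OF BLC] by blast
    have "b \<in> D" unfolding D_def using cmp_closed[of z2 "V - {z1}" E z2 b] cmp_self[OF z2V1] bV1 e by blast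
    then show False using bB BDd by blast
  qed
  have extE2: "exterior E z2 E2" unfolding exterior_def using bB BE2 bnb by blast
  have extE2A: "exterior E z2 (E2 - A)" unfolding exterior_def using bB BE2 bnb ABd by blast
  have E2A: "cmp (H - {z2}) E z1 = E2 - A"
  proof
    show "cmp (H - {z2}) E z1 \<subseteq> E2 - A"
    proof
      fix y assume y: "y \<in> cmp (H - {z2}) E z1"
      then have "reach (H - {z2}) E z1 y" "y \<in> H - {z2}" unfolding cmp_def by auto
      moreover have "H - {z2} \<subseteq> V - {z2}" unfolding H_def by blast
      ultimately have "reach (V - {z2}) E z1 y" "y \<in> V - {z2}" using reach_mono[of "H - {z2}" "V - {z2}" E z1 y] by blast+
      then show "y \<in> E2 - A" using \<open>y \<in> H - {z2}\<close> unfolding E2_def cmp_def H_def by blast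
    qed
  next
    show "E2 - A \<subseteq> cmp (H - {z2}) E z1"
    proof
      fix y assume y: "y \<in> E2 - A"
      have yV2: "y \<in> V - {z2}" using y unfolding E2_def cmp_def by blast
      have yH2: "y \<in> H - {z2}" using y yV2 unfolding H_def by blast
      show "y \<in> cmp (H - {z2}) E z1"
      proof (cases "y = z1")
        case True then show ?thesis using cmp_self[OF z1H2] by simp
      next
        case False
        have "reach (V - {z2}) E z1 y" using y unfolding E2_def cmp_def by blast
        then have "reach (V - {z2}) E y z1" by (rule reach_sym[OF sym])
        from reach_first_hit[OF this False] obtain w where
          w: "reach (V - {z2} - {z1}) E y w" "E w z1" "w \<in> V - {z2} - {z1}" by blast
        define W' where "W' = V - {z2} - {z1}"
        have yW': "y \<in> W'" unfolding W'_def using yV2 False by blast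
        have r: "reach (cmp W' E y) E y w" using reach_cmp[OF yW'] w(1) unfolding W'_def by blast
        have wc: "w \<in> cmp W' E y" using w(1,3) unfolding W'_def cmp_def by blast
        have yV1: "y \<in> V - {z1}" using yV2 False by blast
        have sub1: "cmp W' E y \<subseteq> cmp (V - {z1}) E y"
          by (rule cmp_reach_mono[OF yW']) (auto simp: W'_def)
        define K where "K = cmp (V - {z1}) E y"
        have KLC: "K \<in> LC1" unfolding K_def LC1_def components_cmp using yV1 by blast
        have "y \<in> K" unfolding K_def using cmp_self[OF yV1] .
        then have "K \<noteq> A" using y by blast
        then have "K \<inter> A = {}" using LC1disj KLC ALC by blast
        moreover have "cmp W' E y \<subseteq> W'" by (rule cmp_sub)
        ultimately have sub2: "cmp W' E y \<subseteq> H - {z2}" using sub1 unfolding K_def[symmetric] H_def W'_def by blast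
        have r2: "reach (H - {z2}) E y w" using reach_mono[OF sub2 r] .
        have "reach (H - {z2}) E w z1" using reach_edge[of w "H - {z2}" z1 E] wc sub2 z1H2 w(2) by blast
        then have "reach (H - {z2}) E y z1" using reach_trans[OF r2] by blast
        then have "reach (H - {z2}) E z1 y" by (rule reach_sym[OF sym])
        then show ?thesis unfolding cmp_def using yH2 by blast
      qed
    qed
  qed
  have other: "K = cmp (H - {z2}) E x \<and> K \<inter> A = {}"
    if KLC: "K \<in> LC2" and z1K: "z1 \<notin> K" and xK: "x \<in> K" for K x
  proof -
    have KE: "K \<noteq> E2" using z1K z1E2 by blast
    have KEd: "K \<inter> E2 = {}" using comp_disjoint[OF sym] KLC E2LC KE unfolding LC2_def by blast
    have KAd: "K \<inter> A = {}" using KEd AE2 by blast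
    have KV2: "K \<subseteq> V - {z2}" using comp_sub[of K "V - {z2}" E] KLC unfolding LC2_def by blast
    have KH2: "K \<subseteq> H - {z2}" using KV2 KAd unfolding H_def by blast
    have Kx: "K = cmp (V - {z2}) E x" using comp_of_mem[OF sym _ xK] KLC unfolding LC2_def by blast
    have xV2: "x \<in> V - {z2}" using xK KV2 by blast
    have "cmp (H - {z2}) E x \<subseteq> K" unfolding Kx
      by (rule cmp_reach_mono) (use xK KH2 H_def in auto)
    moreover have "K \<subseteq> cmp (H - {z2}) E x"
    proof
      fix y assume yK: "y \<in> K"
      have "reach (V - {z2}) E x y" using yK Kx unfolding cmp_def by blast
      then have "reach K E x y" using reach_cmp[OF xV2] Kx by simp
      then have "reach (H - {z2}) E x y" using reach_mono[OF KH2] by blast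
      then show "y \<in> cmp (H - {z2}) E x" unfolding cmp_def using yK KH2 by blast
    qed
    ultimately show ?thesis using KAd by blast
  qed
  have LC2eq: "LC2' = insert (E2 - A) (LC2 - {E2})"
  proof
    show "LC2' \<subseteq> insert (E2 - A) (LC2 - {E2})"
    proof
      fix K' assume K': "K' \<in> LC2'"
      obtain x where x: "x \<in> H - {z2}" "K' = cmp (H - {z2}) E x" using K' unfolding LC2'_def components_cmp by blast
      show "K' \<in> insert (E2 - A) (LC2 - {E2})"
      proof (cases "z1 \<in> K'")
        case True
        then have "K' = cmp (H - {z2}) E z1" using cmp_mem_eq[OF sym, of z1 "H - {z2}" x] x(2) by simp
        then show ?thesis using E2A by simp
      next
        case False
        have xV2: "x \<in> V - {z2}" using x(1) unfolding H_def by blast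
        define K where "K = cmp (V - {z2}) E x"
        have KLC: "K \<in> LC2" unfolding K_def LC2_def components_cmp using xV2 by blast
        have xK: "x \<in> K" unfolding K_def using cmp_self[OF xV2] .
        have z1K: "z1 \<notin> K"
        proof
          assume "z1 \<in> K"
          then have "reach (V - {z2}) E x z1" unfolding K_def cmp_def by blast
          then have "reach (V - {z2}) E z1 x" by (rule reach_sym[OF sym])
          then have "x \<in> E2" unfolding E2_def cmp_def using xV2 by blast
          moreover have "x \<notin> A" using x(1) unfolding H_def by blast
          ultimately have "x \<in> cmp (H - {z2}) E z1" using E2A by blast
          then have "cmp (H - {z2}) E x = cmp (H - {z2}) E z1" by (rule cmp_mem_eq[OF sym])
          then have "z1 \<in> K'" using x(2) cmp_self[OF z1H2] by simp
          then show False using False by blast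
        qed
        have "K = K'" using other[OF KLC z1K xK] x(2) by simp
        moreover have "K \<noteq> E2" using z1K z1E2 by blast
        ultimately show ?thesis using KLC by blast
      qed
    qed
  next
    show "insert (E2 - A) (LC2 - {E2}) \<subseteq> LC2'"
    proof
      fix K assume K: "K \<in> insert (E2 - A) (LC2 - {E2})"
      show "K \<in> LC2'"
      proof (cases "K = E2 - A")
        case True
        then show ?thesis unfolding LC2'_def components_cmp using E2A z1H2 by blast
      next
        case False
        then have KLC: "K \<in> LC2" and KE: "K \<noteq> E2" using K by auto
        have z1K: "z1 \<notin> K"
        proof
          assume "z1 \<in> K"
          then have "K = cmp (V - {z2}) E z1" using comp_of_mem[OF sym KLC[unfolded LC2_def]] by blast
          then show False using KE unfolding E2_def by simp
        qed
        obtain x0 where x0: "x0 \<in> V - {z2}" "K = cmp (V - {z2}) E x0" using KLC unfolding LC2_def components_cmp by blast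
        have xK: "x0 \<in> K" using x0 cmp_self[OF x0(1)] by simp
        have "K = cmp (H - {z2}) E x0" using other[OF KLC z1K xK] by blast
        moreover have "x0 \<in> H - {z2}" using other[OF KLC z1K xK] xK x0(1)
          unfolding H_def by blast
        ultimately show ?thesis unfolding LC2'_def components_cmp by blast
      qed
    qed
  qed
  have finLC2: "finite LC2" unfolding LC2_def components_cmp using finV by simp
  have notin: "E2 - A \<notin> LC2 - {E2}"
  proof
    assume "E2 - A \<in> LC2 - {E2}"
    then have m: "E2 - A \<in> components (V - {z2}) E" unfolding LC2_def by blast
    have "z1 \<in> E2 - A" using z1E2 z1 LC1sub[OF ALC] by blast
    then have "E2 - A = cmp (V - {z2}) E z1" using comp_of_mem[OF sym m] by blast
    then show False using \<open>E2 - A \<in> LC2 - {E2}\<close> unfolding E2_def by simp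
  qed
  have cardeq: "card LC2' = card LC2"
  proof -
    have "card LC2' = Suc (card (LC2 - {E2}))" unfolding LC2eq using notin finLC2 by simp
    also have "\<dots> = card LC2" by (rule card_Suc_Diff1[OF finLC2 E2LC])
    finally show ?thesis .
  qed
  have NEeq: "{C \<in> LC2'. \<not> exterior E z2 C} = {C \<in> LC2. \<not> exterior E z2 C}"
    unfolding LC2eq using extE2 extE2A by auto
  have "wt_at H E z2 = wt_at V E z2"
    unfolding wt_at_def Let_def local_components_def LC2_def[symmetric] LC2'_def[symmetric]
    by (simp only: cardeq NEeq)
  then show False using wtH impH w2 by simp
qed


theorem theorem3p2:
  fixes V :: "'a set" and E :: "'a \<Rightarrow> 'a \<Rightarrow> bool" and p :: nat
  assumes "interval_graph V E"
    and "connected_graph V E"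
    and "balanced V E"
    and "p \<ge> 1"
    and "critical p V E"
  shows "\<exists>!z. basepoint V E z"
proof -
  have sg: "simple_graph V E" and "\<exists>I. interval_rep V E I" using assms(1) unfolding interval_graph_def by auto
  then obtain I where rep: "interval_rep V E I" by blast
  have finV: "finite V" using sg unfolding simple_graph_def by blast
  have sym: "symp E" using sg unfolding simple_graph_def symp_def by blast
  have conn: "\<forall>x\<in>V. \<forall>y\<in>V. reach V E x y" using assms(2) unfolding connected_graph_def by blast
  have impp: "impropriety V E = p" using assms(5) unfolding critical_def by blast
  have crit: "\<forall>V'. V' \<subset> V \<longrightarrow> impropriety V' E < p" using assms(5) unfolding critical_def by blast
  have wtp: "wt V E = p" using assms(3) impp unfolding balanced_def by simp
  have "Max (insert 0 (wt_at V E ` V)) \<in> insert 0 (wt_at V E ` V)"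
    by (rule Max_in) (simp_all add: finV)
  then have "p \<in> insert 0 (wt_at V E ` V)" using wtp unfolding wt_def by simp
  then obtain z where z: "z \<in> V" "wt_at V E z = p" using assms(4) by auto
  have bz: "basepoint V E z" unfolding basepoint_def using assms(3) z impp by simp
  show ?thesis
  proof (rule ex1I[of _ z])
    show "basepoint V E z" by (rule bz)
  next
    fix y assume "basepoint V E y"
    then have y: "y \<in> V" "wt_at V E y = p" unfolding basepoint_def using impp by auto
    show "y = z"
    proof (rule ccontr)
      assume "y \<noteq> z"
      show False
        by (rule two_bp_false[OF finV sym rep conn crit y(1) z(1) \<open>y \<noteq> z\<close>]) (use y z assms(4) in auto)
    qed
  qed
qed

end
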